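(* Let $X$ be a locally convex space, let $T:X\rightrightarrows X^{*}$, and let $V\subset X$ with $V\cap D(T)\neq\emptyset$. The following are equivalent: (i) $T$ is $V$-representable; (ii) $T|_{V}\in\mathcal{M}(X)$ and $[\psi_{T|_{V}}=c]\cap(V\times X^{*})\subset T|_{V}$; (iii) $T|_{V}\in\mathcal{M}(X)$ and $[\psi_{T|_{V}}=c]\cap(V\times X^{*})=T|_{V}$; (iv) $\psi_{T|_{V}}$ is a $V$-representative of $T|_{V}$.
   Context: $(X,\tau)$ is a non-trivial Hausdorff locally convex space, $X^*$ its dual with weak-star topology $\omega^*$, $Z=X\times X^*$ with topology $\tau\times\omega^*$, $c(x,x^* )=\langle x,x^*\rangle$. Operators are identified with their graphs; $D(T)$ is the domain; $T|_V$ has graph $\operatorname{Graph}T\cap(V\times X^* )$. $\psi_T$ is the $\tau\times\omega^*$-lsc convex hull of $c+\iota_{\operatorname{Graph}T}$ (the greatest $\tau\times\omega^*$-lsc convex function majorized by it). $[f=g]=\{z\mid f(z)=g(z)\}$. $\mathcal M(X)$: monotone operators with non-empty graph. $\mathscr R$: proper convex $\tau\times\omega^*$-lsc $h:Z\to\overline{\mathbb R}$ with $h\ge c$. $T$ is $V$-representable if $V\cap D(T)\neq\emptyset$ and there is $h\in\mathscr R$ (a $V$-representative of $T$) with $[h=c]\cap(V\times X^* )=\operatorname{Graph}(T|_V)$. *)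

theory Defs
  imports "HOL-Analysis.Analysis"
begin

definition lcs :: "'a::real_vector topology \<Rightarrow> bool" where
  "lcs tau \<longleftrightarrow> topspace tau = UNIV \<and> Hausdorff_space tau
     \<and> continuous_map (prod_topology tau tau) tau (\<lambda>(x, y). x + y)
     \<and> continuous_map (prod_topology euclideanreal tau) tau (\<lambda>(t, x). t *\<^sub>R x)
     \<and> (\<forall>U. openin tau U \<and> 0 \<in> U \<longrightarrow> (\<exists>W. openin tau W \<and> convex W \<and> 0 \<in> W \<and> W \<subseteq> U))"

definition nontrivial_space :: "'a::real_vector topology \<Rightarrow> bool" where
  "nontrivial_space tau \<longleftrightarrow> (\<exists>x::'a. x \<noteq> 0)"

definition dual :: "'a::real_vector topology \<Rightarrow> ('a \<Rightarrow> real) set" where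
  "dual tau = {f. linear f \<and> continuous_map tau euclideanreal f}"

definition wstar :: "'a::real_vector topology \<Rightarrow> ('a \<Rightarrow> real) topology" where
  "wstar tau = subtopology (product_topology (\<lambda>_. euclideanreal) UNIV) (dual tau)"

definition Zspace :: "'a::real_vector topology \<Rightarrow> ('a \<times> ('a \<Rightarrow> real)) set" where
  "Zspace tau = UNIV \<times> dual tau"

definition Ztop :: "'a::real_vector topology \<Rightarrow> ('a \<times> ('a \<Rightarrow> real)) topology" where
  "Ztop tau = prod_topology tau (wstar tau)"

definition cpl :: "'a \<times> ('a \<Rightarrow> real) \<Rightarrow> real" where
  "cpl z = snd z (fst z)"

definition zcomb :: "real \<Rightarrow> 'a::real_vector \<times> ('a \<Rightarrow> real) \<Rightarrow> 'a \<times> ('a \<Rightarrow> real) \<Rightarrow> 'a \<times> ('a \<Rightarrow> real)" where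
  "zcomb t z w = (t *\<^sub>R fst z + (1 - t) *\<^sub>R fst w, \<lambda>y. t * snd z y + (1 - t) * snd w y)"

definition convex_Z :: "'a::real_vector topology \<Rightarrow> ('a \<times> ('a \<Rightarrow> real) \<Rightarrow> ereal) \<Rightarrow> bool" where
  "convex_Z tau h \<longleftrightarrow> (\<forall>z\<in>Zspace tau. \<forall>w\<in>Zspace tau. \<forall>r s t. h z \<le> ereal r \<and> h w \<le> ereal s
      \<and> 0 \<le> t \<and> t \<le> 1 \<longrightarrow> h (zcomb t z w) \<le> ereal (t * r + (1 - t) * s))"

definition lsc_Z :: "'a::real_vector topology \<Rightarrow> ('a \<times> ('a \<Rightarrow> real) \<Rightarrow> ereal) \<Rightarrow> bool" where
  "lsc_Z tau h \<longleftrightarrow> (\<forall>a::ereal. closedin (Ztop tau) {z \<in> Zspace tau. h z \<le> a})"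

definition proper_Z :: "'a::real_vector topology \<Rightarrow> ('a \<times> ('a \<Rightarrow> real) \<Rightarrow> ereal) \<Rightarrow> bool" where
  "proper_Z tau h \<longleftrightarrow> (\<forall>z\<in>Zspace tau. h z \<noteq> -\<infinity>) \<and> (\<exists>z\<in>Zspace tau. h z < \<infinity>)"

definition Rcl :: "'a::real_vector topology \<Rightarrow> ('a \<times> ('a \<Rightarrow> real) \<Rightarrow> ereal) set" where
  "Rcl tau = {h. proper_Z tau h \<and> convex_Z tau h \<and> lsc_Z tau h
               \<and> (\<forall>z\<in>Zspace tau. ereal (cpl z) \<le> h z)}"

text \<open>Operators X \<rightrightarrows> X* are identified with their graphs (subsets of Z).\<close>
type_synonym 'a op = "('a \<times> ('a \<Rightarrow> real)) set"

definition operator :: "'a::real_vector topology \<Rightarrow> 'a op \<Rightarrow> bool" where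
  "operator tau T \<longleftrightarrow> T \<subseteq> Zspace tau"

definition dom_op :: "'a op \<Rightarrow> 'a set" where
  "dom_op T = fst ` T"

definition restr :: "'a op \<Rightarrow> 'a set \<Rightarrow> 'a op" where
  "restr T V = T \<inter> (V \<times> UNIV)"

definition monotone_op :: "'a::real_vector op \<Rightarrow> bool" where
  "monotone_op T \<longleftrightarrow> T \<noteq> {} \<and>
     (\<forall>(x, f)\<in>T. \<forall>(y, g)\<in>T. 0 \<le> (f x - g x) - (f y - g y))"

definition psi :: "'a::real_vector topology \<Rightarrow> 'a op \<Rightarrow> ('a \<times> ('a \<Rightarrow> real) \<Rightarrow> ereal)" where
  "psi tau T z = Sup {g z | g. convex_Z tau g \<and> lsc_Z tau g \<and>
      (\<forall>w\<in>Zspace tau. g w \<le> (if w \<in> T then ereal (cpl w) else \<infinity>))}"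

definition eqc :: "'a::real_vector topology \<Rightarrow> ('a \<times> ('a \<Rightarrow> real) \<Rightarrow> ereal) \<Rightarrow> 'a op" where
  "eqc tau h = {z \<in> Zspace tau. h z = ereal (cpl z)}"

definition V_representative :: "'a::real_vector topology \<Rightarrow> 'a set \<Rightarrow> 'a op \<Rightarrow> ('a \<times> ('a \<Rightarrow> real) \<Rightarrow> ereal) \<Rightarrow> bool" where
  "V_representative tau V T h \<longleftrightarrow> h \<in> Rcl tau \<and> eqc tau h \<inter> (V \<times> UNIV) = restr T V"

definition V_representable :: "'a::real_vector topology \<Rightarrow> 'a set \<Rightarrow> 'a op \<Rightarrow> bool" where
  "V_representable tau V T \<longleftrightarrow> V \<inter> dom_op T \<noteq> {} \<and> (\<exists>h. V_representative tau V T h)"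

end

theory Submission
  imports Defs
begin

lemma topspace_Ztop: "lcs tau \<Longrightarrow> topspace (Ztop tau) = Zspace tau"
  by (simp add: lcs_def Ztop_def Zspace_def wstar_def)

lemma dual_comb:
  assumes "f \<in> dual tau" "g \<in> dual tau"
  shows "(\<lambda>y. t * f y + (1 - t) * g y) \<in> dual tau"
proof -
  have "linear f" "linear g" using assms by (auto simp: dual_def)
  hence "linear (\<lambda>y. t * f y + (1 - t) * g y)"
    unfolding linear_iff
  proof (intro conjI allI)
    fix x y show "t * f (x + y) + (1 - t) * g (x + y) = (t * f x + (1 - t) * g x) + (t * f y + (1 - t) * g y)"
      using \<open>linear f\<close> \<open>linear g\<close> by (simp add: linear_add distrib_left)
  next
    fix c :: real and x show "t * f (c *\<^sub>R x) + (1 - t) * g (c *\<^sub>R x) = c *\<^sub>R (t * f x + (1 - t) * g x)"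
      using \<open>linear f\<close> \<open>linear g\<close> by (simp add: linear_scale distrib_left mult.left_commute)
  qed
  moreover have "continuous_map tau euclideanreal (\<lambda>y. t * f y + (1 - t) * g y)"
    using assms by (auto simp: dual_def intro!: continuous_intros)
  ultimately show ?thesis by (simp add: dual_def)
qed

lemma zcomb_Z:
  assumes "z \<in> Zspace tau" "w \<in> Zspace tau"
  shows "zcomb t z w \<in> Zspace tau"
  using assms dual_comb[of "snd z" tau "snd w" t] by (auto simp: Zspace_def zcomb_def)

lemma cont_aff:
  assumes "lcs tau" "g \<in> dual tau"
  shows "continuous_map (Ztop tau) euclideanreal (\<lambda>z. g (fst z) + snd z y - g y)"
proof -
  have g: "continuous_map tau euclideanreal g" using assms by (simp add: dual_def)
  have 1: "continuous_map (Ztop tau) euclideanreal (\<lambda>z. g (fst z))"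
    using continuous_map_compose[OF continuous_map_fst g] unfolding Ztop_def by (simp add: o_def)
  have p: "continuous_map (wstar tau) euclideanreal (\<lambda>f. f y)"
    unfolding wstar_def
    by (rule continuous_map_from_subtopology) (rule continuous_map_product_projection, simp)
  have 2: "continuous_map (Ztop tau) euclideanreal (\<lambda>z. snd z y)"
    using continuous_map_compose[OF continuous_map_snd p] unfolding Ztop_def by (simp add: o_def)
  show ?thesis using 1 2 by (intro continuous_intros)
qed

definition aff :: "'a \<times> ('a \<Rightarrow> real) \<Rightarrow> 'a \<times> ('a \<Rightarrow> real) \<Rightarrow> ereal" where
  "aff w z = ereal (snd w (fst z) + snd z (fst w) - snd w (fst w))"

lemma aff_lsc:
  assumes "lcs tau" "w \<in> Zspace tau"
  shows "lsc_Z tau (aff w)"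
  unfolding lsc_Z_def
proof
  fix a :: ereal
  have c: "continuous_map (Ztop tau) euclideanreal (\<lambda>z. snd w (fst z) + snd z (fst w) - snd w (fst w))"
    using cont_aff[OF assms(1), of "snd w" "fst w"] assms(2) by (auto simp: Zspace_def)
  show "closedin (Ztop tau) {z \<in> Zspace tau. aff w z \<le> a}"
  proof (cases a)
    case (real r)
    have "closedin (Ztop tau) {z \<in> topspace (Ztop tau). (snd w (fst z) + snd z (fst w) - snd w (fst w)) \<in> {..r}}"
      by (rule closedin_continuous_map_preimage[OF c]) simp
    thus ?thesis using real by (simp add: aff_def topspace_Ztop[OF assms(1)])
  next
    case PInf
    thus ?thesis using closedin_topspace[of "Ztop tau"] by (simp add: topspace_Ztop[OF assms(1)])
  next
    case MInf
    thus ?thesis by (simp add: aff_def)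
  qed
qed

lemma aff_convex:
  assumes "w \<in> Zspace tau"
  shows "convex_Z tau (aff w)"
  unfolding convex_Z_def
proof (intro ballI allI impI)
  fix z u and r s t :: real assume z: "z \<in> Zspace tau" and u: "u \<in> Zspace tau"
    and h: "aff w z \<le> ereal r \<and> aff w u \<le> ereal s \<and> 0 \<le> t \<and> t \<le> 1"
  have lin: "linear (snd w)" using assms by (auto simp: Zspace_def dual_def)
  have e: "snd w (t *\<^sub>R fst z + (1 - t) *\<^sub>R fst u) = t * snd w (fst z) + (1-t) * snd w (fst u)"
    using lin by (simp add: linear_add linear_scale)
  have r: "snd w (fst z) + snd z (fst w) - snd w (fst w) \<le> r"
   and s: "snd w (fst u) + snd u (fst w) - snd w (fst w) \<le> s" using h by (auto simp: aff_def)
  have "t * (snd w (fst z) + snd z (fst w) - snd w (fst w)) \<le> t * r" using r h by (simp add: mult_left_mono)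
  moreover have "(1-t) * (snd w (fst u) + snd u (fst w) - snd w (fst w)) \<le> (1-t) * s" using s h by (simp add: mult_left_mono)
  moreover have "aff w (zcomb t z u) = ereal (t * (snd w (fst z) + snd z (fst w) - snd w (fst w)) + (1-t) * (snd w (fst u) + snd u (fst w) - snd w (fst w)))"
    unfolding aff_def zcomb_def fst_conv snd_conv e by (simp add: algebra_simps)
  ultimately show "aff w (zcomb t z u) \<le> ereal (t * r + (1 - t) * s)"
    by simp
qed

lemma psi_le:
  assumes "z \<in> Zspace tau"
  shows "psi tau S z \<le> (if z \<in> S then ereal (cpl z) else \<infinity>)"
  unfolding psi_def using assms by (auto intro!: Sup_least)

lemma psi_ge:
  assumes "convex_Z tau g" "lsc_Z tau g" "\<forall>w\<in>Zspace tau. g w \<le> (if w \<in> S then ereal (cpl w) else \<infinity>)"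
  shows "g z \<le> psi tau S z"
  unfolding psi_def by (rule Sup_upper) (use assms in blast)

lemma psi_convex: "convex_Z tau (psi tau S)"
  unfolding convex_Z_def
proof (intro ballI allI impI)
  fix z w and r s t :: real assume z: "z \<in> Zspace tau" and w: "w \<in> Zspace tau"
    and h: "psi tau S z \<le> ereal r \<and> psi tau S w \<le> ereal s \<and> 0 \<le> t \<and> t \<le> 1"
  show "psi tau S (zcomb t z w) \<le> ereal (t * r + (1 - t) * s)"
    unfolding psi_def
  proof (rule Sup_least, clarify)
    fix g assume g: "convex_Z tau g" "lsc_Z tau g"
      "\<forall>w\<in>Zspace tau. g w \<le> (if w \<in> S then ereal (cpl w) else \<infinity>)"
    have "g z \<le> ereal r" using psi_ge[OF g] h order_trans by blast
    moreover have "g w \<le> ereal s" using psi_ge[OF g] h order_trans by blast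
    ultimately show "g (zcomb t z w) \<le> ereal (t * r + (1 - t) * s)"
      using g(1) z w h unfolding convex_Z_def by blast
  qed
qed

lemma psi_lsc:
  assumes "lcs tau"
  shows "lsc_Z tau (psi tau S)"
  unfolding lsc_Z_def
proof
  fix a :: ereal
  define G where "G = {g. convex_Z tau g \<and> lsc_Z tau g \<and>
      (\<forall>w\<in>Zspace tau. g w \<le> (if w \<in> S then ereal (cpl w) else \<infinity>))}"
  define K where "K = insert (Zspace tau) ((\<lambda>g. {z \<in> Zspace tau. g z \<le> a}) ` G)"
  have eq: "{z \<in> Zspace tau. psi tau S z \<le> a} = \<Inter>K"
  proof -
    have "\<And>z. psi tau S z = Sup ((\<lambda>g. g z) ` G)"
      unfolding psi_def G_def by (rule arg_cong[where f=Sup]) auto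
    thus ?thesis unfolding K_def by (auto simp: Sup_le_iff)
  qed
  have "closedin (Ztop tau) (\<Inter>K)"
  proof (rule closedin_Inter)
    show "K \<noteq> {}" by (simp add: K_def)
  next
    fix X assume "X \<in> K"
    thus "closedin (Ztop tau) X"
      unfolding K_def G_def lsc_Z_def using closedin_topspace[of "Ztop tau"]
      by (auto simp: topspace_Ztop[OF assms])
  qed
  thus "closedin (Ztop tau) {z \<in> Zspace tau. psi tau S z \<le> a}" using eq by simp
qed

lemma psi_ge_c:
  assumes "lcs tau" "monotone_op S" "S \<subseteq> Zspace tau" "z0 \<in> Zspace tau"
  shows "ereal (cpl z0) \<le> psi tau S z0"
proof -
  have mon: "\<And>u w. u \<in> S \<Longrightarrow> w \<in> S \<Longrightarrow> 0 \<le> (snd u (fst u) - snd w (fst u)) - (snd u (fst w) - snd w (fst w))"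
    using assms(2) unfolding monotone_op_def by fastforce
  obtain w where w: "w \<in> Zspace tau" and wb: "\<forall>u\<in>Zspace tau. aff w u \<le> (if u \<in> S then ereal (cpl u) else \<infinity>)"
     and w0: "ereal (cpl z0) \<le> aff w z0"
  proof (cases "\<forall>u\<in>S. 0 \<le> (snd u (fst u) - snd z0 (fst u)) - (snd u (fst z0) - snd z0 (fst z0))")
    case True
    show ?thesis
    proof (rule that[of z0])
      show "z0 \<in> Zspace tau" by fact
      show "\<forall>u\<in>Zspace tau. aff z0 u \<le> (if u \<in> S then ereal (cpl u) else \<infinity>)"
        using True by (auto simp: aff_def cpl_def)
      show "ereal (cpl z0) \<le> aff z0 z0" by (simp add: aff_def cpl_def)
    qed
  next
    case False
    then obtain v where v: "v \<in> S" and lt: "(snd v (fst v) - snd z0 (fst v)) - (snd v (fst z0) - snd z0 (fst z0)) < 0"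
      by (auto simp: not_le)
    show ?thesis
    proof (rule that[of v])
      show "v \<in> Zspace tau" using v assms(3) by blast
      show "\<forall>u\<in>Zspace tau. aff v u \<le> (if u \<in> S then ereal (cpl u) else \<infinity>)"
      proof
        fix u assume "u \<in> Zspace tau"
        show "aff v u \<le> (if u \<in> S then ereal (cpl u) else \<infinity>)"
          using mon[of u v] v by (auto simp: aff_def cpl_def)
      qed
      show "ereal (cpl z0) \<le> aff v z0" using lt by (simp add: aff_def cpl_def)
    qed
  qed
  have "aff w z0 \<le> psi tau S z0"
    by (rule psi_ge[OF aff_convex[OF w] aff_lsc[OF assms(1) w] wb])
  thus ?thesis using w0 by simp
qed

lemma eqc_mono:
  assumes "convex_Z tau h" "\<forall>z\<in>Zspace tau. ereal (cpl z) \<le> h z"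
    "z \<in> Zspace tau" "w \<in> Zspace tau" "h z = ereal (cpl z)" "h w = ereal (cpl w)"
  shows "0 \<le> (snd z (fst z) - snd w (fst z)) - (snd z (fst w) - snd w (fst w))"
proof -
  define m where "m = zcomb (1/2) z w"
  have mZ: "m \<in> Zspace tau" unfolding m_def by (rule zcomb_Z[OF assms(3,4)])
  have "h m \<le> ereal (1/2 * cpl z + (1 - 1/2) * cpl w)"
    unfolding m_def
    by (rule convex_Z_def[THEN iffD1, OF assms(1), rule_format, OF assms(3,4)]) (use assms(5,6) in simp)
  moreover have "ereal (cpl m) \<le> h m" using assms(2) mZ by blast
  ultimately have "ereal (cpl m) \<le> ereal (1/2 * cpl z + (1 - 1/2) * cpl w)" by (rule order_trans[rotated])
  hence le: "cpl m \<le> 1/2 * cpl z + 1/2 * cpl w" by simp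
  have lz: "linear (snd z)" and lw: "linear (snd w)" using assms(3,4) by (auto simp: Zspace_def dual_def)
  have "cpl m = 1/4 * (snd z (fst z) + snd z (fst w) + snd w (fst z) + snd w (fst w))"
    unfolding m_def zcomb_def cpl_def using lz lw by (simp add: linear_add linear_scale algebra_simps) (simp add: field_simps)
  thus ?thesis using le by (simp add: cpl_def)
qed

theorem theorem2p14:
  fixes tau :: "'a::real_vector topology" and T :: "'a op" and V :: "'a set"
  assumes "lcs tau" and "nontrivial_space tau"
    and "operator tau T"
    and "V \<inter> dom_op T \<noteq> {}"
  shows "(V_representable tau V T
            \<longleftrightarrow> (monotone_op (restr T V) \<and> eqc tau (psi tau (restr T V)) \<inter> (V \<times> UNIV) \<subseteq> restr T V))
       \<and> (V_representable tau V T
            \<longleftrightarrow> (monotone_op (restr T V) \<and> eqc tau (psi tau (restr T V)) \<inter> (V \<times> UNIV) = restr T V))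
       \<and> (V_representable tau V T
            \<longleftrightarrow> V_representative tau V (restr T V) (psi tau (restr T V)))"
proof -
  define S where "S = restr T V"
  define p where "p = psi tau S"
  have SZ: "S \<subseteq> Zspace tau" using assms(3) by (auto simp: S_def restr_def operator_def)
  have SV: "S \<subseteq> V \<times> UNIV" by (auto simp: S_def restr_def)
  have rr: "restr S V = S" by (auto simp: S_def restr_def)
  obtain x1 where "x1 \<in> V" "x1 \<in> fst ` T" using assms(4) unfolding dom_op_def by blast
  then obtain z1 where "z1 \<in> T" "fst z1 = x1" by blast
  hence z1: "z1 \<in> S" using \<open>x1 \<in> V\<close> unfolding S_def restr_def by (cases z1) auto
  have Sne: "S \<noteq> {}" using z1 by blast
  have pconv: "convex_Z tau p" unfolding p_def by (rule psi_convex)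
  have plsc: "lsc_Z tau p" unfolding p_def by (rule psi_lsc[OF assms(1)])
  have ple: "\<And>z. z \<in> Zspace tau \<Longrightarrow> p z \<le> (if z \<in> S then ereal (cpl z) else \<infinity>)"
    unfolding p_def by (rule psi_le)
  have key: "p \<in> Rcl tau \<and> S \<subseteq> eqc tau p" if ge: "\<forall>z\<in>Zspace tau. ereal (cpl z) \<le> p z"
  proof
    have "z1 \<in> Zspace tau" using z1 SZ by blast
    hence "p z1 \<le> ereal (cpl z1)" using ple[of z1] z1 by simp
    hence "p z1 < \<infinity>" by (rule le_less_trans) simp
    moreover have "\<forall>z\<in>Zspace tau. p z \<noteq> -\<infinity>"
    proof
      fix z assume "z \<in> Zspace tau"
      hence "ereal (cpl z) \<le> p z" using ge by blast
      thus "p z \<noteq> -\<infinity>" by auto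
    qed
    ultimately have "proper_Z tau p" unfolding proper_Z_def using \<open>z1 \<in> Zspace tau\<close> by blast
    thus "p \<in> Rcl tau" using pconv plsc ge by (simp add: Rcl_def)
    show "S \<subseteq> eqc tau p"
    proof
      fix z assume "z \<in> S"
      hence zZ: "z \<in> Zspace tau" using SZ by blast
      have "p z \<le> ereal (cpl z)" using ple[OF zZ] \<open>z \<in> S\<close> by simp
      hence "p z = ereal (cpl z)" by (rule order_antisym) (use ge zZ in blast)
      thus "z \<in> eqc tau p" using zZ by (simp add: eqc_def)
    qed
  qed
  have i_iv: "V_representative tau V S p" if R: "V_representable tau V T"
  proof -
    obtain h where h: "h \<in> Rcl tau" "eqc tau h \<inter> (V \<times> UNIV) = S"
      using R unfolding V_representable_def V_representative_def S_def by blast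
    have hb: "\<forall>w\<in>Zspace tau. h w \<le> (if w \<in> S then ereal (cpl w) else \<infinity>)"
    proof
      fix w assume wZ: "w \<in> Zspace tau"
      show "h w \<le> (if w \<in> S then ereal (cpl w) else \<infinity>)"
      proof (cases "w \<in> S")
        case True
        hence "w \<in> eqc tau h" using h(2) by blast
        thus ?thesis using True by (simp add: eqc_def)
      qed simp
    qed
    have hp: "\<And>z. h z \<le> p z" unfolding p_def
      by (rule psi_ge) (use h(1) hb in \<open>auto simp: Rcl_def\<close>)
    have hc: "\<forall>z\<in>Zspace tau. ereal (cpl z) \<le> h z" using h(1) by (simp add: Rcl_def)
    have ge: "\<forall>z\<in>Zspace tau. ereal (cpl z) \<le> p z" using hc hp order_trans by blast
    note k = key[OF ge]
    have "eqc tau p \<inter> (V \<times> UNIV) \<subseteq> S"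
    proof
      fix z assume z: "z \<in> eqc tau p \<inter> (V \<times> UNIV)"
      hence zZ: "z \<in> Zspace tau" and pz: "p z = ereal (cpl z)" unfolding eqc_def by blast+
      have "h z \<le> ereal (cpl z)" using hp[of z] pz by simp
      hence "h z = ereal (cpl z)" by (rule order_antisym) (use hc zZ in blast)
      hence "z \<in> eqc tau h" using zZ by (simp add: eqc_def)
      thus "z \<in> S" using h(2) z by blast
    qed
    hence "eqc tau p \<inter> (V \<times> UNIV) = S" using k SV by blast
    thus ?thesis using k unfolding V_representative_def rr by blast
  qed
  have iv_i: "V_representable tau V T" if "V_representative tau V S p"
  proof -
    have "p \<in> Rcl tau" "eqc tau p \<inter> (V \<times> UNIV) = S" using that rr unfolding V_representative_def by simp_all
    hence "V_representative tau V T p" unfolding V_representative_def S_def by blast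
    thus ?thesis using assms(4) unfolding V_representable_def by blast
  qed
  have iv_iii: "monotone_op S \<and> eqc tau p \<inter> (V \<times> UNIV) = S" if "V_representative tau V S p"
  proof
    have R: "p \<in> Rcl tau" and E: "eqc tau p \<inter> (V \<times> UNIV) = S"
      using that rr unfolding V_representative_def by simp_all
    show "eqc tau p \<inter> (V \<times> UNIV) = S" by (rule E)
    have c: "\<forall>z\<in>Zspace tau. ereal (cpl z) \<le> p z" using R by (simp add: Rcl_def)
    show "monotone_op S"
      unfolding monotone_op_def
    proof (intro conjI Sne ballI, clarify)
      fix x f y g assume a: "(x, f) \<in> S" "(y, g) \<in> S"
      hence "(x, f) \<in> eqc tau p" "(y, g) \<in> eqc tau p" using E by auto
      thus "0 \<le> f x - g x - (f y - g y)"
        using eqc_mono[OF pconv c, of "(x,f)" "(y,g)"] by (auto simp: eqc_def)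
    qed
  qed
  have ii_iv: "V_representative tau V S p" if "monotone_op S" "eqc tau p \<inter> (V \<times> UNIV) \<subseteq> S"
  proof -
    have ge: "\<forall>z\<in>Zspace tau. ereal (cpl z) \<le> p z"
      unfolding p_def using psi_ge_c[OF assms(1) that(1) SZ] by blast
    note k = key[OF ge]
    have "eqc tau p \<inter> (V \<times> UNIV) = S" using k that(2) SV by blast
    thus ?thesis using k rr by (simp add: V_representative_def)
  qed
  have A: "V_representable tau V T \<longleftrightarrow> (monotone_op S \<and> eqc tau p \<inter> (V \<times> UNIV) \<subseteq> S)"
  proof
    assume "V_representable tau V T"
    thus "monotone_op S \<and> eqc tau p \<inter> (V \<times> UNIV) \<subseteq> S" using i_iv iv_iii by blast
  next
    assume "monotone_op S \<and> eqc tau p \<inter> (V \<times> UNIV) \<subseteq> S"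
    thus "V_representable tau V T" using ii_iv iv_i by blast
  qed
  have B: "V_representable tau V T \<longleftrightarrow> (monotone_op S \<and> eqc tau p \<inter> (V \<times> UNIV) = S)"
  proof
    assume "V_representable tau V T"
    thus "monotone_op S \<and> eqc tau p \<inter> (V \<times> UNIV) = S" using i_iv iv_iii by blast
  next
    assume "monotone_op S \<and> eqc tau p \<inter> (V \<times> UNIV) = S"
    thus "V_representable tau V T" using ii_iv iv_i by (metis order_refl)
  qed
  have C: "V_representable tau V T \<longleftrightarrow> V_representative tau V S p"
    using i_iv iv_i by blast
  show ?thesis using A B C unfolding S_def p_def by simp
qed

end
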